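(* Consider the $\mathrm{Top}\text{-}\ell$ version of fault-tolerant ordered $k$-median, fix an optimal solution with optimal value $\mathsf{OPT}$, and let $T_\ell=\vec{\xi}^\downarrow_\ell$ be the $\ell$-th largest individual connection distance in that optimal solution. Then the following linear program (Top-LP), in variables $x_{ij}$ ($i\in\mathcal{F},j\in\mathcal{C}$), $y_i$ ($i\in\mathcal{F}$), $R_\ell$, is feasible and its optimal value satisfies $R_\ell\le\mathsf{OPT}$: minimize $R_\ell\geq0$ subject to $\sum_{j\in\mathcal{C}}\sum_{i\in\mathcal{F}}x_{ij}\mathcal{L}_{1.001\cdot T_\ell}(i,j)\le R_\ell$; $\sum_{j\in S}\sum_{i\in\mathcal{F}}x_{ij}d(i,j)\le R_\ell$ for all $S\subseteq\mathcal{C}$ with $|S|=\ell$; $\sum_{i\in\mathcal{F}}x_{ij}=r_j$ for all $j\in\mathcal{C}$; $\sum_{i\in\mathcal{F}}y_i=k$; $0\le x_{ij}\le y_i\le1$ for all $i\in\mathcal{F},j\in\mathcal{C}$.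
   Context: Fault-tolerant ordered $k$-median: given finite facility set $\mathcal{F}$, finite client set $\mathcal{C}$ with $n=|\mathcal{C}|$, a metric $d$ on $\mathcal{F}\cup\mathcal{C}$, $k\in\mathbb{Z}_+$, requirements $r_j\in\mathbb{Z}_+$ for $j\in\mathcal{C}$, and a non-increasing non-negative $w\in\mathbb{R}^n$. A solution opens a set $F\subseteq\mathcal{F}$ of at most $k$ facilities; each client $j$ is connected to its $r_j$ nearest (distinct) open facilities, with service cost $d_{r_j}(j,F)=\min_{S'\subseteq F,|S'|=r_j}\sum_{i\in S'}d(i,j)$; the objective is $w^\top\vec{c}^\downarrow$ with $\vec{c}=(d_{r_j}(j,F):j\in\mathcal{C})$ sorted non-increasingly. In the $\mathrm{Top}\text{-}\ell$ version ($\ell\in[n]$), $w$ consists of $\ell$ ones followed by zeros, so the objective is the sum of the $\ell$ largest service costs. The individual connection cost vector $\vec{\xi}$ of a solution is the vector of distances $d(i,j)$ over all pairs where client $j$ is connected to facility $i$; $\vec{\xi}^\downarrow$ is it sorted non-increasingly. For $T\geq0$, $\mathcal{L}_T(i,j)=d(i,j)$ if $d(i,j)\geq T$ and $0$ otherwise. *)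

theory Defs
  imports Complex_Main "HOL-Library.Multiset"
begin

definition is_metric_on :: "'a set \<Rightarrow> ('a \<Rightarrow> 'a \<Rightarrow> real) \<Rightarrow> bool" where
  "is_metric_on X d \<longleftrightarrow>
     (\<forall>x\<in>X. \<forall>y\<in>X. d x y \<ge> 0 \<and> d x y = d y x \<and> (d x y = 0 \<longleftrightarrow> x = y)) \<and>
     (\<forall>x\<in>X. \<forall>y\<in>X. \<forall>z\<in>X. d x z \<le> d x y + d y z)"

definition serv_cost :: "('a \<Rightarrow> 'a \<Rightarrow> real) \<Rightarrow> nat \<Rightarrow> 'a \<Rightarrow> 'a set \<Rightarrow> real" where
  "serv_cost d r j F = Min ((\<lambda>S'. \<Sum>i\<in>S'. d i j) ` {S'. S' \<subseteq> F \<and> card S' = r})"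

definition sorted_desc :: "real multiset \<Rightarrow> real list" where
  "sorted_desc M = rev (sorted_list_of_multiset M)"

definition top_sum :: "nat \<Rightarrow> real multiset \<Rightarrow> real" where
  "top_sum l M = sum_list (take l (sorted_desc M))"

definition feasible_sol :: "'a set \<Rightarrow> 'a set \<Rightarrow> nat \<Rightarrow> ('a \<Rightarrow> nat) \<Rightarrow> 'a set \<Rightarrow> bool" where
  "feasible_sol Fac Cl k r F \<longleftrightarrow> F \<subseteq> Fac \<and> card F \<le> k \<and> (\<forall>j\<in>Cl. r j \<le> card F)"

definition topl_cost :: "('a \<Rightarrow> 'a \<Rightarrow> real) \<Rightarrow> 'a set \<Rightarrow> ('a \<Rightarrow> nat) \<Rightarrow> nat \<Rightarrow> 'a set \<Rightarrow> real" where
  "topl_cost d Cl r l F = top_sum l (image_mset (\<lambda>j. serv_cost d (r j) j F) (mset_set Cl))"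

definition conn_costs :: "('a \<Rightarrow> 'a \<Rightarrow> real) \<Rightarrow> 'a set \<Rightarrow> ('a \<Rightarrow> 'a set) \<Rightarrow> real multiset" where
  "conn_costs d Cl S = image_mset (\<lambda>(j, i). d i j) (mset_set (SIGMA j:Cl. S j))"

definition LT :: "real \<Rightarrow> real \<Rightarrow> real" where
  "LT T a = (if a \<ge> T then a else 0)"

end

theory Submission
  imports Defs
begin


lemma sorted_desc_props: "mset (sorted_desc M) = M" "sorted_wrt (\<ge>) (sorted_desc M)"
  unfolding sorted_desc_def
   apply simp
  apply (simp only: sorted_wrt_rev)
  using sorted_sorted_list_of_multiset[of M] by simp

lemma sub_le_take:
  assumes "sorted_wrt (\<ge>) xs" "\<forall>v\<in>set xs. (0::real) \<le> v" "N \<subseteq># mset xs" "size N \<le> l"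
  shows "sum_mset N \<le> sum_list (take l xs)"
  using assms
proof (induction xs arbitrary: N l)
  case Nil thus ?case by simp
next
  case (Cons x ys)
  show ?case
  proof (cases l)
    case 0 thus ?thesis using Cons by simp
  next
    case (Suc l')
    have nn: "0 \<le> sum_list (take l' ys)"
      by (rule sum_list_nonneg) (use Cons.prems(2) in \<open>auto dest: in_set_takeD\<close>)
    show ?thesis
    proof (cases "x \<in># N")
      case True
      have "add_mset x (N - {#x#}) \<subseteq># add_mset x (mset ys)" using Cons.prems(3) True
        by (simp add: insert_DiffM)
      hence "N - {#x#} \<subseteq># mset ys" unfolding insert_subset_eq_iff by simp
      moreover have "size (N - {#x#}) \<le> l'" using Cons.prems(4) True Suc by (simp add: size_Diff_singleton)
      ultimately have "sum_mset (N - {#x#}) \<le> sum_list (take l' ys)"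
        using Cons by auto
      moreover have "sum_mset N = x + sum_mset (N - {#x#})" using True
        by (simp add: sum_mset.remove)
      ultimately show ?thesis using Suc by simp
    next
      case False
      have sub: "N \<subseteq># mset ys" unfolding subseteq_mset_def
      proof
        fix a
        have "count N a \<le> count (add_mset x (mset ys)) a" using Cons.prems(3)
          unfolding subseteq_mset_def by simp
        thus "count N a \<le> count (mset ys) a" using False
          by (cases "a = x") (auto simp: not_in_iff)
      qed
      show ?thesis
      proof (cases "N = {#}")
        case True thus ?thesis using Suc nn Cons.prems(2) by simp
      next
        case False
        then obtain y where y: "y \<in># N" by (meson multiset_nonemptyE)
        have "y \<in># mset ys" by (rule mset_subset_eqD[OF sub y])
        hence yys: "y \<in> set ys" by simp
        hence "y \<le> x" using Cons.prems(1) by simp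
        have "N - {#y#} \<subseteq># mset ys" by (rule subset_mset.order_trans[OF _ sub]) simp
        moreover have "size (N - {#y#}) \<le> l'" using Cons.prems(4) y Suc by (simp add: size_Diff_singleton)
        ultimately have "sum_mset (N - {#y#}) \<le> sum_list (take l' ys)"
          using Cons by auto
        moreover have "sum_mset N = y + sum_mset (N - {#y#})" using y
          by (simp add: sum_mset.remove)
        ultimately show ?thesis using Suc \<open>y \<le> x\<close> by simp
      qed
    qed
  qed
qed

lemma subset_le_top_sum:
  assumes "finite Cl" "A \<subseteq> Cl" "card A \<le> l" "\<forall>j\<in>Cl. 0 \<le> f j"
  shows "sum f A \<le> top_sum l (image_mset f (mset_set Cl))"
proof -
  let ?M = "image_mset f (mset_set Cl)"
  have "sum f A = sum_mset (image_mset f (mset_set A))" by (simp add: sum_unfold_sum_mset)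
  also have "\<dots> \<le> sum_list (take l (sorted_desc ?M))"
  proof (rule sub_le_take)
    show "sorted_wrt (\<ge>) (sorted_desc ?M)" by (rule sorted_desc_props)
    show "\<forall>v\<in>set (sorted_desc ?M). 0 \<le> v"
    proof -
      have "set_mset (mset (sorted_desc ?M)) = set_mset ?M" by (simp only: sorted_desc_props(1))
      hence "set (sorted_desc ?M) = f ` Cl" using assms(1) by simp
      thus ?thesis using assms(4) by auto
    qed
    show "image_mset f (mset_set A) \<subseteq># mset (sorted_desc ?M)"
      unfolding sorted_desc_props(1)
      by (rule image_mset_subseteq_mono, rule subset_imp_msubset_mset_set) (use assms in auto)
    show "size (image_mset f (mset_set A)) \<le> l" using assms by simp
  qed
  finally show ?thesis unfolding top_sum_def .
qed

lemma few_above: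
  assumes "l \<ge> 1" "l \<le> size M"
  shows "size (filter_mset (\<lambda>v. v > sorted_desc M ! (l - 1)) M) \<le> l - 1"
proof -
  let ?xs = "sorted_desc M" let ?T = "?xs ! (l - 1)"
  have len: "length ?xs = size M" by (metis sorted_desc_props(1) size_mset)
  have "\<forall>v\<in>set (drop (l-1) ?xs). v \<le> ?T"
  proof
    fix v assume "v \<in> set (drop (l-1) ?xs)"
    then obtain p where p: "p < length ?xs - (l-1)" "v = ?xs ! (l - 1 + p)"
      by (auto simp: in_set_conv_nth)
    show "v \<le> ?T"
    proof (cases p)
      case 0 thus ?thesis using p by simp
    next
      case (Suc q)
      thus ?thesis using p sorted_desc_props(2)[of M] by (auto simp: sorted_wrt_iff_nth_less)
    qed
  qed
  hence "filter (\<lambda>v. v > ?T) (drop (l-1) ?xs) = []" by (auto simp: filter_empty_conv)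
  hence "length (filter (\<lambda>v. v > ?T) ?xs) = length (filter (\<lambda>v. v > ?T) (take (l-1) ?xs))"
    by (metis append_Nil2 append_take_drop_id filter_append)
  also have "\<dots> \<le> l - 1" by (metis length_filter_le length_take min.bounded_iff nle_le)
  finally show ?thesis by (metis sorted_desc_props(1) mset_filter size_mset)
qed

theorem lemma4:
  fixes Fac Cl :: "'a set" and d :: "'a \<Rightarrow> 'a \<Rightarrow> real" and k l :: nat
    and r :: "'a \<Rightarrow> nat" and F0 :: "'a set" and S :: "'a \<Rightarrow> 'a set"
  assumes "finite Fac" and "finite Cl"
    and "is_metric_on (Fac \<union> Cl) d"
    and "k \<ge> 1" and "k \<le> card Fac"
    and "\<forall>j\<in>Cl. r j \<ge> 1"
    and "1 \<le> l" and "l \<le> card Cl"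
    and opt_feas: "feasible_sol Fac Cl k r F0"
    and opt: "\<forall>F'. feasible_sol Fac Cl k r F' \<longrightarrow> topl_cost d Cl r l F0 \<le> topl_cost d Cl r l F'"
    and assign: "\<forall>j\<in>Cl. S j \<subseteq> F0 \<and> card (S j) = r j \<and> (\<Sum>i\<in>S j. d i j) = serv_cost d (r j) j F0"
  shows "\<exists>(x :: 'a \<Rightarrow> 'a \<Rightarrow> real) (y :: 'a \<Rightarrow> real) (R :: real).
           (let OPT = topl_cost d Cl r l F0;
                T = sorted_desc (conn_costs d Cl S) ! (l - 1) in
             R \<ge> 0 \<and>
             (\<Sum>j\<in>Cl. \<Sum>i\<in>Fac. x i j * LT (1.001 * T) (d i j)) \<le> R \<and>
             (\<forall>A. A \<subseteq> Cl \<and> card A = l \<longrightarrow> (\<Sum>j\<in>A. \<Sum>i\<in>Fac. x i j * d i j) \<le> R) \<and>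
             (\<forall>j\<in>Cl. (\<Sum>i\<in>Fac. x i j) = real (r j)) \<and>
             (\<Sum>i\<in>Fac. y i) = real k \<and>
             (\<forall>i\<in>Fac. \<forall>j\<in>Cl. 0 \<le> x i j \<and> x i j \<le> y i \<and> y i \<le> 1) \<and>
             R \<le> OPT)"
proof -
  note fin = assms(1,2)
  have met: "\<And>i j. i \<in> Fac \<Longrightarrow> j \<in> Cl \<Longrightarrow> 0 \<le> d i j"
    using assms(3) unfolding is_metric_on_def by blast
  have F0: "F0 \<subseteq> Fac" "card F0 \<le> k" using opt_feas unfolding feasible_sol_def by auto
  obtain F1 where F1: "F0 \<subseteq> F1" "F1 \<subseteq> Fac" "card F1 = k"
    using exists_subset_between[OF F0(2) assms(5) F0(1) fin(1)] by blast
  have finF1: "finite F1" using F1(2) fin(1) finite_subset by blast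
  have Sj: "\<And>j. j \<in> Cl \<Longrightarrow> S j \<subseteq> Fac \<and> finite (S j) \<and> card (S j) = r j \<and> S j \<noteq> {}"
  proof -
    fix j assume j: "j \<in> Cl"
    hence "S j \<subseteq> F0" "card (S j) = r j" "r j \<ge> 1" using assign assms(6) by auto
    thus "S j \<subseteq> Fac \<and> finite (S j) \<and> card (S j) = r j \<and> S j \<noteq> {}"
      using F0(1) by (auto intro: card_ge_0_finite)
  qed
  define sc where "sc j = serv_cost d (r j) j F0" for j
  have sc: "\<And>j. j \<in> Cl \<Longrightarrow> sc j = (\<Sum>i\<in>S j. d i j)" using assign sc_def by simp
  have scnn: "\<forall>j\<in>Cl. 0 \<le> sc j" using sc Sj met by (metis subsetD sum_nonneg)
  define OPT where "OPT = topl_cost d Cl r l F0"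
  have OPT: "OPT = top_sum l (image_mset sc (mset_set Cl))"
    unfolding OPT_def topl_cost_def sc_def ..
  define P where "P = (SIGMA j:Cl. S j)"
  have finP: "finite P" unfolding P_def using fin(2) Sj by auto
  define g where "g = (\<lambda>(j, i). d i j)"
  define cc where "cc = conn_costs d Cl S"
  have cc: "cc = image_mset g (mset_set P)" unfolding cc_def conn_costs_def P_def g_def ..
  define T where "T = sorted_desc cc ! (l - 1)"
  have "card P = (\<Sum>j\<in>Cl. card (S j))" unfolding P_def using fin(2) Sj by (simp add: card_SigmaI)
  moreover have "(\<Sum>j\<in>Cl. card (S j)) \<ge> (\<Sum>j\<in>Cl. 1)"
    by (rule sum_mono) (use Sj assms(6) in auto)
  ultimately have "card P \<ge> card Cl" by simp
  hence szcc: "l \<le> size cc" using assms(8) cc by simp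
  have "T \<in> set (sorted_desc cc)" unfolding T_def
  proof (rule nth_mem)
    have "length (sorted_desc cc) = size cc" by (metis sorted_desc_props(1) size_mset)
    thus "l - 1 < length (sorted_desc cc)" using szcc assms(7) by linarith
  qed
  hence "T \<in># cc" by (metis sorted_desc_props(1) set_mset_mset)
  then obtain p where p: "p \<in> P" "T = g p" unfolding cc using finP by auto
  have Tnn: "0 \<le> T" using p met Sj unfolding P_def g_def by auto
  define Q where "Q = {p\<in>P. T < g p}"
  have "size (filter_mset (\<lambda>v. T < v) cc) \<le> l - 1" unfolding T_def by (rule few_above[OF assms(7) szcc])
  hence cardQ: "card Q \<le> l - 1" unfolding cc Q_def using finP by (simp add: filter_mset_image_mset)
  define C' where "C' = fst ` Q"
  have C'sub: "C' \<subseteq> Cl" unfolding C'_def Q_def P_def by auto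
  have cardC': "card C' \<le> l" unfolding C'_def using cardQ card_image_le[of Q fst] finP Q_def
    by (metis (no_types, lifting) diff_le_self finite_subset le_trans mem_Collect_eq subsetI)
  define x where "x i j = (if i \<in> S j then 1 else (0::real))" for i j
  define y where "y i = (if i \<in> F1 then 1 else (0::real))" for i
  have xsum: "\<And>j v. j \<in> Cl \<Longrightarrow> (\<Sum>i\<in>Fac. x i j * v i) = (\<Sum>i\<in>S j. v i)"
  proof -
    fix j v assume j: "j \<in> Cl"
    have "(\<Sum>i\<in>Fac. x i j * v i) = (\<Sum>i\<in>Fac. if i \<in> S j then v i else 0)"
      unfolding x_def by (rule sum.cong) auto
    also have "\<dots> = sum v (Fac \<inter> S j)" using sum.inter_restrict[OF fin(1)] by metis
    also have "Fac \<inter> S j = S j" using Sj j by auto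
    finally show "(\<Sum>i\<in>Fac. x i j * v i) = (\<Sum>i\<in>S j. v i)" .
  qed
  let ?L = "\<lambda>a. LT (1.001 * T) a"
  have Lle: "\<And>a. 0 \<le> a \<Longrightarrow> ?L a \<le> a" "\<And>a. 0 \<le> a \<Longrightarrow> 0 \<le> ?L a" "\<And>a. 0 \<le> a \<Longrightarrow> a \<le> T \<Longrightarrow> ?L a = 0"
    using Tnn unfolding LT_def by auto
  have c1: "(\<Sum>j\<in>Cl. \<Sum>i\<in>Fac. x i j * ?L (d i j)) \<le> OPT"
  proof -
    have "(\<Sum>j\<in>Cl. \<Sum>i\<in>Fac. x i j * ?L (d i j)) = (\<Sum>j\<in>Cl. \<Sum>i\<in>S j. ?L (d i j))"
      by (rule sum.cong) (auto simp: xsum)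
    also have "\<dots> = (\<Sum>j\<in>C'. \<Sum>i\<in>S j. ?L (d i j))"
    proof (rule sum.mono_neutral_right[OF fin(2) C'sub])
      show "\<forall>j\<in>Cl - C'. (\<Sum>i\<in>S j. ?L (d i j)) = 0"
      proof (intro ballI sum.neutral)
        fix j i assume j: "j \<in> Cl - C'" and i: "i \<in> S j"
        have "(j, i) \<in> P" using j i unfolding P_def by auto
        hence "\<not> T < d i j" using j unfolding C'_def Q_def g_def by force
        moreover have "0 \<le> d i j" using met Sj j i by auto
        ultimately show "?L (d i j) = 0" using Lle(3) by simp
      qed
    qed
    also have "\<dots> \<le> (\<Sum>j\<in>C'. sc j)"
    proof (rule sum_mono)
      fix j assume j: "j \<in> C'"
      hence j': "j \<in> Cl" using C'sub by auto
      show "(\<Sum>i\<in>S j. ?L (d i j)) \<le> sc j" unfolding sc[OF j']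
        by (rule sum_mono, rule Lle(1), rule met) (use Sj j' in auto)
    qed
    also have "\<dots> \<le> OPT" unfolding OPT by (rule subset_le_top_sum[OF fin(2) C'sub cardC' scnn])
    finally show ?thesis .
  qed
  have c2: "\<forall>A. A \<subseteq> Cl \<and> card A = l \<longrightarrow> (\<Sum>j\<in>A. \<Sum>i\<in>Fac. x i j * d i j) \<le> OPT"
  proof (intro allI impI)
    fix A assume A: "A \<subseteq> Cl \<and> card A = l"
    have "(\<Sum>j\<in>A. \<Sum>i\<in>Fac. x i j * d i j) = (\<Sum>j\<in>A. sc j)"
      by (rule sum.cong) (use A xsum sc in auto)
    also have "\<dots> \<le> OPT" unfolding OPT by (rule subset_le_top_sum[OF fin(2)]) (use A scnn in auto)
    finally show "(\<Sum>j\<in>A. \<Sum>i\<in>Fac. x i j * d i j) \<le> OPT" .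
  qed
  have c3: "\<forall>j\<in>Cl. (\<Sum>i\<in>Fac. x i j) = real (r j)"
    using xsum[where v="\<lambda>_. 1"] Sj by simp
  have c4: "(\<Sum>i\<in>Fac. y i) = real k"
  proof -
    have "(\<Sum>i\<in>Fac. y i) = (\<Sum>i\<in>Fac. if i \<in> F1 then 1 else 0)" unfolding y_def ..
    also have "\<dots> = real (card (Fac \<inter> F1))" using sum.inter_restrict[OF fin(1), of "\<lambda>_. (1::real)" F1] by simp
    also have "Fac \<inter> F1 = F1" using F1 by auto
    finally show ?thesis using F1 by simp
  qed
  have c5: "\<forall>i\<in>Fac. \<forall>j\<in>Cl. 0 \<le> x i j \<and> x i j \<le> y i \<and> y i \<le> 1"
    using assign F1 unfolding x_def y_def by auto
  have Rnn: "0 \<le> OPT" unfolding OPT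
    using subset_le_top_sum[OF fin(2) empty_subsetI, of l sc] scnn by simp
  have main: "0 \<le> OPT \<and>
             (\<Sum>j\<in>Cl. \<Sum>i\<in>Fac. x i j * LT (1.001 * T) (d i j)) \<le> OPT \<and>
             (\<forall>A. A \<subseteq> Cl \<and> card A = l \<longrightarrow> (\<Sum>j\<in>A. \<Sum>i\<in>Fac. x i j * d i j) \<le> OPT) \<and>
             (\<forall>j\<in>Cl. (\<Sum>i\<in>Fac. x i j) = real (r j)) \<and>
             (\<Sum>i\<in>Fac. y i) = real k \<and>
             (\<forall>i\<in>Fac. \<forall>j\<in>Cl. 0 \<le> x i j \<and> x i j \<le> y i \<and> y i \<le> 1) \<and>
             OPT \<le> OPT"
    using Rnn c1 c2 c3 c4 c5 by blast
  show ?thesis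
    unfolding Let_def
    apply (rule exI[of _ x], rule exI[of _ y], rule exI[of _ "topl_cost d Cl r l F0"])
    by (rule main[unfolded OPT_def T_def cc_def])
qed

end
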